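(* Let $G$ be a cohomologically finite dimensional locally compact second countable group. Then $\dim_{\mathbb{R}}\mathrm{Pol}_d(G)<+\infty$ for all $d\in\mathbb{N}$.
   Context: $G$ is cohomologically finite dimensional if $\dim_{\mathbb{R}}H^n(G,\mathcal{E})<\infty$ (continuous cohomology) for every finite dimensional continuous $G$-module $\mathcal{E}$ and every $n\in\mathbb{N}$. For $\xi\colon G\to\mathbb{R}$ and $g\in G$ let $(\partial_g\xi)(h)=\xi(g^{-1}h)-\xi(h)$. $\mathrm{Pol}_d(G)$ is the space of continuous $\xi\colon G\to\mathbb{R}$ such that $\partial_{g_1}\cdots\partial_{g_{d+1}}\xi\equiv0$ for all $g_1,\dots,g_{d+1}\in G$ (continuous polynomial maps of degree at most $d$). *)

theory Defs
  imports "HOL-Analysis.Analysis" "HOL-Algebra.Group"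
begin

definition topological_group :: "('g, 'b) monoid_scheme \<Rightarrow> 'g topology \<Rightarrow> bool" where
  "topological_group G T \<longleftrightarrow>
     group G \<and> topspace T = carrier G \<and>
     continuous_map (prod_topology T T) T (\<lambda>(x, y). x \<otimes>\<^bsub>G\<^esub> y) \<and>
     continuous_map T T (\<lambda>x. inv\<^bsub>G\<^esub> x)"

definition lcsc_group :: "('g, 'b) monoid_scheme \<Rightarrow> 'g topology \<Rightarrow> bool" where
  "lcsc_group G T \<longleftrightarrow> topological_group G T \<and> Hausdorff_space T \<and>
     locally_compact_space T \<and> second_countable T"

section \<open>Finite dimensional continuous G-modules, modelled as R^m with a matrix representation\<close>

text \<open>A representation on R^m: rho g k l is the (k,l) matrix entry (k,l < m) of the action of g.\<close>
definition cont_rep :: "('g, 'b) monoid_scheme \<Rightarrow> 'g topology \<Rightarrow> nat \<Rightarrow> ('g \<Rightarrow> nat \<Rightarrow> nat \<Rightarrow> real) \<Rightarrow> bool" where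
  "cont_rep G T m rho \<longleftrightarrow>
     (\<forall>k<m. \<forall>l<m. continuous_map T euclideanreal (\<lambda>g. rho g k l)) \<and>
     (\<forall>k<m. \<forall>l<m. rho \<one>\<^bsub>G\<^esub> k l = (if k = l then 1 else 0)) \<and>
     (\<forall>g\<in>carrier G. \<forall>h\<in>carrier G. \<forall>k<m. \<forall>l<m.
        rho (g \<otimes>\<^bsub>G\<^esub> h) k l = (\<Sum>p<m. rho g k p * rho h p l))"

text \<open>An n-cochain is a map G^n \<rightarrow> R^m, where G^n = PiE {..<n} (\<lambda>_. carrier G) carries the product
  topology and a vector of R^m is a function nat \<Rightarrow> real of which only the coordinates < m matter.\<close>

definition cochains :: "'g topology \<Rightarrow> nat \<Rightarrow> nat \<Rightarrow> ((nat \<Rightarrow> 'g) \<Rightarrow> nat \<Rightarrow> real) set" where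
  "cochains T m n = {f. \<forall>k<m. continuous_map (product_topology (\<lambda>_. T) {..<n}) euclideanreal (\<lambda>x. f x k)}"

definition coboundary :: "('g, 'b) monoid_scheme \<Rightarrow> nat \<Rightarrow> ('g \<Rightarrow> nat \<Rightarrow> nat \<Rightarrow> real) \<Rightarrow> nat \<Rightarrow>
    ((nat \<Rightarrow> 'g) \<Rightarrow> nat \<Rightarrow> real) \<Rightarrow> (nat \<Rightarrow> 'g) \<Rightarrow> nat \<Rightarrow> real" where
  "coboundary G m rho n f x k =
     (\<Sum>l<m. rho (x 0) k l * f (restrict (\<lambda>i. x (Suc i)) {..<n}) l)
     + (\<Sum>j<n. (-1) ^ (j + 1) *
          f (restrict (\<lambda>i. if i < j then x i else if i = j then x j \<otimes>\<^bsub>G\<^esub> x (Suc j) else x (Suc i)) {..<n}) k)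
     + (-1) ^ (n + 1) * f (restrict x {..<n}) k"

definition cocycles :: "('g, 'b) monoid_scheme \<Rightarrow> 'g topology \<Rightarrow> nat \<Rightarrow> ('g \<Rightarrow> nat \<Rightarrow> nat \<Rightarrow> real) \<Rightarrow> nat \<Rightarrow>
    ((nat \<Rightarrow> 'g) \<Rightarrow> nat \<Rightarrow> real) set" where
  "cocycles G T m rho n = {f \<in> cochains T m n.
      \<forall>x\<in>PiE {..<Suc n} (\<lambda>_. carrier G). \<forall>k<m. coboundary G m rho n f x k = 0}"

definition is_coboundary :: "('g, 'b) monoid_scheme \<Rightarrow> 'g topology \<Rightarrow> nat \<Rightarrow> ('g \<Rightarrow> nat \<Rightarrow> nat \<Rightarrow> real) \<Rightarrow> nat \<Rightarrow>
    ((nat \<Rightarrow> 'g) \<Rightarrow> nat \<Rightarrow> real) \<Rightarrow> bool" where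
  "is_coboundary G T m rho n g \<longleftrightarrow>
     (case n of
        0 \<Rightarrow> (\<forall>x\<in>PiE {..<0} (\<lambda>_. carrier G). \<forall>k<m. g x k = 0)
      | Suc n' \<Rightarrow> (\<exists>h\<in>cochains T m n'.
           \<forall>x\<in>PiE {..<n} (\<lambda>_. carrier G). \<forall>k<m. g x k = coboundary G m rho n' h x k))"

text \<open>dim H^n(G, R^m_rho) < \<infinity>: finitely many cocycles span Z^n modulo B^n.\<close>
definition fin_dim_cohomology :: "('g, 'b) monoid_scheme \<Rightarrow> 'g topology \<Rightarrow> nat \<Rightarrow> ('g \<Rightarrow> nat \<Rightarrow> nat \<Rightarrow> real) \<Rightarrow> nat \<Rightarrow> bool" where
  "fin_dim_cohomology G T m rho n \<longleftrightarrow>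
     (\<exists>(r::nat) b. (\<forall>j<r. b j \<in> cocycles G T m rho n) \<and>
        (\<forall>f\<in>cocycles G T m rho n. \<exists>c::nat \<Rightarrow> real.
           is_coboundary G T m rho n (\<lambda>x k. f x k - (\<Sum>j<r. c j * b j x k))))"

definition cohom_fin_dim :: "('g, 'b) monoid_scheme \<Rightarrow> 'g topology \<Rightarrow> bool" where
  "cohom_fin_dim G T \<longleftrightarrow>
     (\<forall>m rho n. cont_rep G T m rho \<longrightarrow> fin_dim_cohomology G T m rho n)"

definition left_diff :: "('g, 'b) monoid_scheme \<Rightarrow> 'g \<Rightarrow> ('g \<Rightarrow> real) \<Rightarrow> 'g \<Rightarrow> real" where
  "left_diff G g \<xi> h = \<xi> (inv\<^bsub>G\<^esub> g \<otimes>\<^bsub>G\<^esub> h) - \<xi> h"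

fun iter_diff :: "('g, 'b) monoid_scheme \<Rightarrow> 'g list \<Rightarrow> ('g \<Rightarrow> real) \<Rightarrow> 'g \<Rightarrow> real" where
  "iter_diff G [] \<xi> = \<xi>"
| "iter_diff G (g # gs) \<xi> = left_diff G g (iter_diff G gs \<xi>)"

definition Pol :: "('g, 'b) monoid_scheme \<Rightarrow> 'g topology \<Rightarrow> nat \<Rightarrow> ('g \<Rightarrow> real) set" where
  "Pol G T d = {\<xi>. continuous_map T euclideanreal \<xi> \<and>
      (\<forall>gs. length gs = Suc d \<and> set gs \<subseteq> carrier G \<longrightarrow>
         (\<forall>h\<in>carrier G. iter_diff G gs \<xi> h = 0))}"

text \<open>A space of real functions on S is finite dimensional (functions identified when equal on S).\<close>
definition fin_dim_fun_space :: "'g set \<Rightarrow> ('g \<Rightarrow> real) set \<Rightarrow> bool" where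
  "fin_dim_fun_space S A \<longleftrightarrow>
     (\<exists>(r::nat) b. \<forall>\<xi>\<in>A. \<exists>c::nat \<Rightarrow> real. \<forall>x\<in>S. \<xi> x = (\<Sum>j<r. c j * b j x))"

end

theory Submission
  imports Defs
begin


definition closedA :: "('a \<Rightarrow> real) set \<Rightarrow> bool" where
  "closedA A \<longleftrightarrow> (\<forall>f\<in>A. \<forall>g\<in>A. \<forall>c. (\<lambda>y. f y - c * g y) \<in> A)"

lemma closedA_D:
  assumes "closedA A" "f \<in> A" "g \<in> A"
  shows "(\<lambda>y. f y - c * g y) \<in> A"
  using assms unfolding closedA_def by blast

lemma closed_sum:
  fixes k :: nat
  assumes "closedA A" "f \<in> A" "\<forall>l<k. g l \<in> A"
  shows "(\<lambda>y. f y - (\<Sum>l<k. c l * g l y)) \<in> A"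
  using assms(3)
proof (induction k)
  case 0
  then show ?case using assms(2) by simp
next
  case (Suc k)
  then have "(\<lambda>y. f y - (\<Sum>l<k. c l * g l y)) \<in> A" by simp
  moreover have "g k \<in> A" using Suc by simp
  ultimately have "(\<lambda>y. (\<lambda>y. f y - (\<Sum>l<k. c l * g l y)) y - c k * g k y) \<in> A"
    by (rule closedA_D[OF assms(1)])
  then show ?case by (simp add: algebra_simps)
qed

lemma interp_zero:
  fixes A :: "('a \<Rightarrow> real) set"
  assumes "\<forall>f\<in>A. \<forall>y\<in>S. f y = 0"
  shows "\<exists>(k::nat) xs es. (\<forall>l<k. es l \<in> A \<and> xs l \<in> S) \<and>
     (\<forall>l<k. \<forall>j<k. es l (xs j) = (if l = j then 1 else 0)) \<and>
     (\<forall>f\<in>A. \<forall>y\<in>S. f y = (\<Sum>l<k. f (xs l) * es l y))"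
proof -
  have "(\<forall>l<(0::nat). (es0 :: nat \<Rightarrow> 'a \<Rightarrow> real) l \<in> A \<and> (xs0 :: nat \<Rightarrow> 'a) l \<in> S) \<and>
     (\<forall>l<(0::nat). \<forall>j<0. es0 l (xs0 j) = (if l = j then 1 else 0)) \<and>
     (\<forall>f\<in>A. \<forall>y\<in>S. f y = (\<Sum>l<(0::nat). f (xs0 l) * es0 l y))" for es0 xs0
    using assms by simp
  then show ?thesis by blast
qed

lemma interp_aux:
  fixes A :: "('a \<Rightarrow> real) set" and S :: "'a set" and \<beta> :: "nat \<Rightarrow> 'a \<Rightarrow> real"
  assumes "finite J" "card J = n" "closedA A"
    "\<And>f. f\<in>A \<Longrightarrow> \<exists>c. \<forall>y\<in>S. f y = (\<Sum>j\<in>J. c j * \<beta> j y)"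
  shows "\<exists>(k::nat) xs es. (\<forall>l<k. es l \<in> A \<and> xs l \<in> S) \<and>
     (\<forall>l<k. \<forall>j<k. es l (xs j) = (if l = j then 1 else 0)) \<and>
     (\<forall>f\<in>A. \<forall>y\<in>S. f y = (\<Sum>l<k. f (xs l) * es l y))"
  using assms
proof (induction n arbitrary: A J \<beta>)
  case 0
  then have "J = {}" by simp
  then have Z: "\<forall>f\<in>A. \<forall>y\<in>S. f y = 0" using "0.prems"(4) by auto
  show ?case by (rule interp_zero[OF Z])
next
  case (Suc n)
  note cl = Suc.prems(3)
  show ?case
  proof (cases "\<forall>f\<in>A. \<forall>y\<in>S. f y = 0")
    case True
    note Z = True
    show ?thesis by (rule interp_zero[OF Z])
  next
    case False
    then obtain f x where f: "f \<in> A" and x: "x \<in> S" and fx: "f x \<noteq> 0" by auto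
    define e where "e = (\<lambda>y. f y - (1 - 1 / f x) * f y)"
    have eA: "e \<in> A" unfolding e_def by (rule closedA_D[OF cl f f])
    have ey: "e y = f y / f x" for y using fx unfolding e_def by (simp add: field_simps)
    have ex: "e x = 1" using fx ey by simp
    obtain a where a: "\<forall>y\<in>S. e y = (\<Sum>j\<in>J. a j * \<beta> j y)" using Suc.prems(4) eA by blast
    obtain j0 where j0: "j0 \<in> J" "a j0 \<noteq> 0"
    proof (rule ccontr)
      assume "\<not> thesis"
      then have "\<forall>j\<in>J. a j = 0" using that by blast
      then have "e x = 0" using a x by simp
      then show False using ex by simp
    qed
    define J' where "J' = J - {j0}"
    define \<beta>' where "\<beta>' = (\<lambda>j y. \<beta> j y - \<beta> j x * e y)"
    define A' where "A' = {g \<in> A. g x = 0}"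
    have finJ': "finite J'" using Suc.prems(1) J'_def by simp
    have cardJ': "card J' = n" using Suc.prems(1,2) j0 J'_def by simp
    have clA': "closedA A'" using cl unfolding closedA_def A'_def by auto
    have spanA': "\<exists>c. \<forall>y\<in>S. g y = (\<Sum>j\<in>J'. c j * \<beta>' j y)" if g: "g \<in> A'" for g
    proof -
      obtain c where c: "\<forall>y\<in>S. g y = (\<Sum>j\<in>J. c j * \<beta> j y)" using Suc.prems(4) g A'_def by blast
      define \<kappa> where "\<kappa> = c j0 / a j0"
      define c' where "c' = (\<lambda>j. c j - \<kappa> * a j)"
      have gx: "g x = 0" using g A'_def by simp
      have h1: "(\<Sum>j\<in>J'. c' j * \<beta> j y) = g y - \<kappa> * e y" if y: "y \<in> S" for y
      proof -
        have "(\<Sum>j\<in>J'. c' j * \<beta> j y) = (\<Sum>j\<in>J'. c j * \<beta> j y) - \<kappa> * (\<Sum>j\<in>J'. a j * \<beta> j y)"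
          by (simp add: c'_def algebra_simps sum_subtractf sum_distrib_left)
        also have "(\<Sum>j\<in>J'. c j * \<beta> j y) = g y - c j0 * \<beta> j0 y"
          using c y j0 Suc.prems(1) unfolding J'_def by (simp add: sum.remove)
        also have "(\<Sum>j\<in>J'. a j * \<beta> j y) = e y - a j0 * \<beta> j0 y"
          using a y j0 Suc.prems(1) unfolding J'_def by (simp add: sum.remove)
        finally show ?thesis using j0 by (simp add: \<kappa>_def field_simps)
      qed
      show ?thesis
      proof (intro exI[of _ c'] ballI)
        fix y assume y: "y \<in> S"
        have "(\<Sum>j\<in>J'. c' j * \<beta>' j y) = (\<Sum>j\<in>J'. c' j * \<beta> j y) - (\<Sum>j\<in>J'. c' j * \<beta> j x) * e y"
          by (simp add: \<beta>'_def right_diff_distrib sum_subtractf sum_distrib_left sum_distrib_right mult_ac)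
        also have "\<dots> = g y" using h1[OF y] h1[OF x] gx ex by simp
        finally show "g y = (\<Sum>j\<in>J'. c' j * \<beta>' j y)" by simp
      qed
    qed
    have "\<exists>(k::nat) xs es. (\<forall>l<k. es l \<in> A' \<and> xs l \<in> S) \<and>
     (\<forall>l<k. \<forall>j<k. es l (xs j) = (if l = j then 1 else 0)) \<and>
     (\<forall>f\<in>A'. \<forall>y\<in>S. f y = (\<Sum>l<k. f (xs l) * es l y))"
      by (rule Suc.IH[where A=A' and J=J' and \<beta>=\<beta>', OF finJ' cardJ' clA']) (blast intro: spanA')
    then obtain k :: nat and xs es where
      H1: "\<forall>l<k. es l \<in> A' \<and> xs l \<in> S" and
      H2: "\<forall>l<k. \<forall>j<k. es l (xs j) = (if l = j then 1 else 0)" and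
      H3: "\<forall>g\<in>A'. \<forall>y\<in>S. g y = (\<Sum>l<k. g (xs l) * es l y)"
      by blast
    define e2 where "e2 = (\<lambda>y. e y - (\<Sum>l<k. e (xs l) * es l y))"
    have e2A: "e2 \<in> A" unfolding e2_def
      by (rule closed_sum[OF cl eA]) (use H1 A'_def in auto)
    define xs' where "xs' = xs(k := x)"
    define es' where "es' = (\<lambda>l. if l < k then es l else e2)"
    have esx: "es l x = 0" if "l < k" for l using H1 that A'_def by auto
    have e2xs: "e2 (xs j) = 0" if "j < k" for j
    proof -
      have "(\<Sum>l<k. e (xs l) * es l (xs j)) = (\<Sum>l<k. if l = j then e (xs j) else 0)"
        using H2 that by (intro sum.cong) auto
      also have "\<dots> = e (xs j)" using that by simp
      finally show ?thesis unfolding e2_def by simp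
    qed
    have e2x: "e2 x = 1" unfolding e2_def using esx ex by simp
    show ?thesis
    proof (intro exI[of _ "Suc k"] exI[of _ xs'] exI[of _ es'] conjI)
      show "\<forall>l<Suc k. es' l \<in> A \<and> xs' l \<in> S"
        using H1 e2A x unfolding es'_def xs'_def A'_def by (auto simp: less_Suc_eq)
      show "\<forall>l<Suc k. \<forall>j<Suc k. es' l (xs' j) = (if l = j then 1 else 0)"
        using H2 esx e2xs e2x unfolding es'_def xs'_def by (auto simp: less_Suc_eq)
      show "\<forall>g\<in>A. \<forall>y\<in>S. g y = (\<Sum>l<Suc k. g (xs' l) * es' l y)"
      proof (intro ballI)
        fix g y assume g: "g \<in> A" and y: "y \<in> S"
        define g' where "g' = (\<lambda>y. g y - g x * e y)"
        have "g' \<in> A'" using cl g eA ex unfolding closedA_def A'_def g'_def by auto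
        then have "g' y = (\<Sum>l<k. g' (xs l) * es l y)" using H3 y by blast
        then have "g y = g x * e y + (\<Sum>l<k. (g (xs l) - g x * e (xs l)) * es l y)"
          unfolding g'_def by simp
        also have "\<dots> = (\<Sum>l<k. g (xs l) * es l y) + g x * e2 y"
          unfolding e2_def by (simp add: algebra_simps sum_subtractf sum_distrib_left)
        also have "\<dots> = (\<Sum>l<Suc k. g (xs' l) * es' l y)"
          unfolding xs'_def es'_def by simp
        finally show "g y = (\<Sum>l<Suc k. g (xs' l) * es' l y)" .
      qed
    qed
  qed
qed



section \<open>Topological group basics\<close>

lemma tg_group: "topological_group G T \<Longrightarrow> group G"
  unfolding topological_group_def by blast
lemma tg_top: "topological_group G T \<Longrightarrow> topspace T = carrier G"
  unfolding topological_group_def by blast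
lemma tg_mult: "topological_group G T \<Longrightarrow> continuous_map (prod_topology T T) T (\<lambda>(x, y). x \<otimes>\<^bsub>G\<^esub> y)"
  unfolding topological_group_def by blast
lemma tg_inv: "topological_group G T \<Longrightarrow> continuous_map T T (\<lambda>x. inv\<^bsub>G\<^esub> x)"
  unfolding topological_group_def by blast

lemma cont_mult_fun:
  assumes tg: "topological_group G T" and f: "continuous_map X T f" and g: "continuous_map X T g"
  shows "continuous_map X T (\<lambda>x. f x \<otimes>\<^bsub>G\<^esub> g x)"
proof -
  have "continuous_map X T ((\<lambda>(x, y). x \<otimes>\<^bsub>G\<^esub> y) \<circ> (\<lambda>x. (f x, g x)))"
    by (rule continuous_map_compose[OF continuous_map_pairedI[OF f g] tg_mult[OF tg]])
  then show ?thesis by (simp add: o_def)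
qed

lemma cont_inv_fun:
  assumes tg: "topological_group G T" and f: "continuous_map X T f"
  shows "continuous_map X T (\<lambda>x. inv\<^bsub>G\<^esub> f x)"
proof -
  have "continuous_map X T ((\<lambda>x. inv\<^bsub>G\<^esub> x) \<circ> f)"
    by (rule continuous_map_compose[OF f tg_inv[OF tg]])
  then show ?thesis by (simp add: o_def)
qed

lemma cont_const_g:
  assumes tg: "topological_group G T" and a: "a \<in> carrier G"
  shows "continuous_map X T (\<lambda>x. a)"
  using a tg_top[OF tg] by simp

lemma cont_left_transl:
  assumes tg: "topological_group G T" and a: "a \<in> carrier G"
  shows "continuous_map T T (\<lambda>y. a \<otimes>\<^bsub>G\<^esub> y)"
  by (rule cont_mult_fun[OF tg cont_const_g[OF tg a] continuous_map_id[unfolded id_def]])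

lemma cont_comp_real:
  assumes "continuous_map X T h" "continuous_map T euclideanreal f"
  shows "continuous_map X euclideanreal (\<lambda>x. f (h x))"
  using continuous_map_compose[OF assms] by (simp add: o_def)

section \<open>Polynomial maps\<close>

lemma iter_diff_lin:
  "iter_diff G gs (\<lambda>y. f y - c * g y) h = iter_diff G gs f h - c * iter_diff G gs g h"
  by (induction gs arbitrary: h) (simp_all add: left_diff_def algebra_simps)

lemma Pol_closed:
  shows "closedA (Pol G T d)"
  unfolding closedA_def
proof (intro ballI allI)
  fix f g and c :: real
  assume f: "f \<in> Pol G T d" and g: "g \<in> Pol G T d"
  show "(\<lambda>y. f y - c * g y) \<in> Pol G T d"
    using f g unfolding Pol_def
    by (auto simp: iter_diff_lin intro!: continuous_map_diff continuous_map_real_mult)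
qed

lemma iter_diff_snoc:
  "iter_diff G (gs @ [h]) \<xi> = iter_diff G gs (left_diff G h \<xi>)"
  by (induction gs) simp_all

lemma left_diff_Pol:
  assumes tg: "topological_group G T" and xi: "\<xi> \<in> Pol G T (Suc d)" and h: "h \<in> carrier G"
  shows "left_diff G h \<xi> \<in> Pol G T d"
proof -
  interpret group G using tg_group[OF tg] .
  have c: "continuous_map T euclideanreal \<xi>" using xi Pol_def by blast
  have "continuous_map T euclideanreal (\<lambda>y. \<xi> (inv\<^bsub>G\<^esub> h \<otimes>\<^bsub>G\<^esub> y))"
    by (rule cont_comp_real[OF cont_left_transl[OF tg] c]) (use h in simp)
  then have "continuous_map T euclideanreal (left_diff G h \<xi>)"
    unfolding left_diff_def[abs_def] using c by (intro continuous_map_diff) auto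
  moreover have "iter_diff G gs (left_diff G h \<xi>) y = 0"
    if "length gs = Suc d" "set gs \<subseteq> carrier G" "y \<in> carrier G" for gs y
  proof -
    have "iter_diff G (gs @ [h]) \<xi> y = 0"
      using xi that h unfolding Pol_def by auto
    then show ?thesis by (simp add: iter_diff_snoc)
  qed
  ultimately show ?thesis unfolding Pol_def by blast
qed

lemma iter_diff_transl:
  assumes grp: "group G" and a: "a \<in> carrier G"
  shows "set gs \<subseteq> carrier G \<Longrightarrow> h \<in> carrier G \<Longrightarrow>
    iter_diff G gs (\<lambda>y. \<xi> (a \<otimes>\<^bsub>G\<^esub> y)) h =
    iter_diff G (map (\<lambda>g. a \<otimes>\<^bsub>G\<^esub> g \<otimes>\<^bsub>G\<^esub> inv\<^bsub>G\<^esub> a) gs) \<xi> (a \<otimes>\<^bsub>G\<^esub> h)"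
proof (induction gs arbitrary: h)
  case Nil
  then show ?case by simp
next
  case (Cons g gs)
  interpret group G using grp .
  have g: "g \<in> carrier G" using Cons.prems by simp
  have e: "inv\<^bsub>G\<^esub> (a \<otimes>\<^bsub>G\<^esub> g \<otimes>\<^bsub>G\<^esub> inv\<^bsub>G\<^esub> a) \<otimes>\<^bsub>G\<^esub> (a \<otimes>\<^bsub>G\<^esub> h)
      = a \<otimes>\<^bsub>G\<^esub> (inv\<^bsub>G\<^esub> g \<otimes>\<^bsub>G\<^esub> h)"
  proof -
    have h: "h \<in> carrier G" using Cons.prems by simp
    have "inv\<^bsub>G\<^esub> a \<otimes>\<^bsub>G\<^esub> (a \<otimes>\<^bsub>G\<^esub> h) = h" using a h by (metis inv_closed l_inv l_one m_assoc)
    then show ?thesis using a g h by (simp add: inv_mult_group m_assoc)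
  qed
  show ?case
    using Cons.IH[of "inv\<^bsub>G\<^esub> g \<otimes>\<^bsub>G\<^esub> h"] Cons.IH[of h] Cons.prems g a
    by (simp add: left_diff_def e)
qed

lemma transl_Pol:
  assumes tg: "topological_group G T" and xi: "\<xi> \<in> Pol G T d" and a: "a \<in> carrier G"
  shows "(\<lambda>y. \<xi> (a \<otimes>\<^bsub>G\<^esub> y)) \<in> Pol G T d"
proof -
  interpret group G using tg_group[OF tg] .
  have c: "continuous_map T euclideanreal \<xi>" using xi Pol_def by blast
  have "continuous_map T euclideanreal (\<lambda>y. \<xi> (a \<otimes>\<^bsub>G\<^esub> y))"
    by (rule cont_comp_real[OF cont_left_transl[OF tg a] c])
  moreover have "iter_diff G gs (\<lambda>y. \<xi> (a \<otimes>\<^bsub>G\<^esub> y)) y = 0"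
    if "length gs = Suc d" "set gs \<subseteq> carrier G" "y \<in> carrier G" for gs y
  proof -
    have "set (map (\<lambda>g. a \<otimes>\<^bsub>G\<^esub> g \<otimes>\<^bsub>G\<^esub> inv\<^bsub>G\<^esub> a) gs) \<subseteq> carrier G"
      using that a by auto
    then show ?thesis
      using iter_diff_transl[OF tg_group[OF tg] a that(2,3), of \<xi>] xi that a unfolding Pol_def by auto
  qed
  ultimately show ?thesis unfolding Pol_def by blast
qed

lemma Pol0_const:
  assumes tg: "topological_group G T" and xi: "\<xi> \<in> Pol G T 0" and z: "z \<in> carrier G"
  shows "\<xi> z = \<xi> \<one>\<^bsub>G\<^esub>"
proof -
  interpret group G using tg_group[OF tg] .
  have "\<forall>gs. length gs = Suc 0 \<and> set gs \<subseteq> carrier G \<longrightarrow> (\<forall>h\<in>carrier G. iter_diff G gs \<xi> h = 0)"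
    using xi unfolding Pol_def by blast
  from this[rule_format, of "[inv\<^bsub>G\<^esub> z]" "\<one>\<^bsub>G\<^esub>"]
  have "iter_diff G [inv\<^bsub>G\<^esub> z] \<xi> \<one>\<^bsub>G\<^esub> = 0" using z by simp
  then show ?thesis using z by (simp add: left_diff_def)
qed

lemma sum_split_nat: fixes m :: nat shows "(\<Sum>j<K+m. H j) = (\<Sum>j<K. H j) + (\<Sum>j<m. H (K+j))"
  by (induction m) (simp_all add: add_ac)

lemma fin_dim_combine:
  fixes F E :: "nat \<Rightarrow> 'a \<Rightarrow> real"
  assumes "\<forall>\<xi>\<in>A. \<exists>a w \<kappa>. \<forall>z\<in>S. \<xi> z = (\<Sum>l<K. a l * F l z) + (\<Sum>l<m. w l * E l z) + \<kappa>"
  shows "fin_dim_fun_space S A"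
proof -
  define b where "b = (\<lambda>j. if j < K then F j else if j < K+m then E (j-K) else (\<lambda>_. 1))"
  show ?thesis unfolding fin_dim_fun_space_def
  proof (intro exI[of _ "K+m+1"] exI[of _ b] ballI)
  fix \<xi> assume "\<xi> \<in> A"
  then obtain a w \<kappa> where aw: "\<forall>z\<in>S. \<xi> z = (\<Sum>l<K. a l * F l z) + (\<Sum>l<m. w l * E l z) + \<kappa>"
    using assms by blast
  define c where "c = (\<lambda>j. if j < K then a j else if j < K+m then w (j-K) else \<kappa>)"
  have "\<forall>z\<in>S. \<xi> z = (\<Sum>j<K+m+1. c j * b j z)"
  proof
    fix z assume z: "z \<in> S"
    have "(\<Sum>j<K+m+1. c j * b j z) = (\<Sum>j<K+m. c j * b j z) + \<kappa>"
      by (simp add: c_def b_def)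
    also have "(\<Sum>j<K+m. c j * b j z) = (\<Sum>j<K. c j * b j z) + (\<Sum>j<m. c (K+j) * b (K+j) z)"
      by (rule sum_split_nat)
    also have "(\<Sum>j<K. c j * b j z) = (\<Sum>l<K. a l * F l z)"
      by (rule sum.cong) (simp_all add: c_def b_def)
    also have "(\<Sum>j<m. c (K+j) * b (K+j) z) = (\<Sum>l<m. w l * E l z)"
      by (rule sum.cong) (simp_all add: c_def b_def)
    finally show "\<xi> z = (\<Sum>j<K+m+1. c j * b j z)" using aw z by simp
  qed
  then show "\<exists>c. \<forall>x\<in>S. \<xi> x = (\<Sum>j<K+m+1. c j * b j x)" by blast
qed
qed

lemma cob1:
  assumes "is_coboundary G T m \<rho> 1 g"
  shows "\<exists>v. \<forall>x\<in>PiE {..<1} (\<lambda>_. carrier G). \<forall>k<m. g x k = (\<Sum>l<m. \<rho> (x 0) k l * v l) - v k"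
proof -
  obtain h where h: "\<forall>x\<in>PiE {..<1} (\<lambda>_. carrier G). \<forall>k<m. g x k = coboundary G m \<rho> 0 h x k"
    using assms unfolding is_coboundary_def by (auto simp: One_nat_def)
  have r: "restrict f {..<0} = (\<lambda>_. undefined)" for f :: "nat \<Rightarrow> 'a"
    by (auto simp: restrict_def)
  have r': "restrict f {} = (\<lambda>_. undefined)" for f :: "nat \<Rightarrow> 'a"
    by (auto simp: restrict_def)
  show ?thesis
    by (intro exI[of _ "h (\<lambda>_. undefined)"]) (use h in \<open>simp add: coboundary_def r r'\<close>)
qed

lemma Pol0_fin:
  assumes tg: "topological_group G T"
  shows "fin_dim_fun_space (carrier G) (Pol G T 0)"
  unfolding fin_dim_fun_space_def
proof (intro exI[of _ "1::nat"] exI[of _ "\<lambda>_ _. 1"] ballI)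
  fix \<xi> assume xi: "\<xi> \<in> Pol G T 0"
  show "\<exists>c. \<forall>x\<in>carrier G. \<xi> x = (\<Sum>j<(1::nat). c j * (\<lambda>_ _. 1::real) j x)"
  proof (intro exI[of _ "\<lambda>_. \<xi> \<one>\<^bsub>G\<^esub>"] ballI)
    fix x assume "x \<in> carrier G"
    then show "\<xi> x = (\<Sum>j<(1::nat). (\<lambda>_. \<xi> \<one>\<^bsub>G\<^esub>) j * (\<lambda>_ _. 1::real) j x)"
      using Pol0_const[OF tg xi] by (simp add: lessThan_Suc)
  qed
qed

lemma step:
  assumes tg: "topological_group G T" and cfd: "cohom_fin_dim G T"
    and fd: "fin_dim_fun_space (carrier G) (Pol G T d)"
  shows "fin_dim_fun_space (carrier G) (Pol G T (Suc d))"
proof -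
  interpret group G using tg_group[OF tg] .
  obtain r :: nat and b where rb: "\<forall>\<xi>\<in>Pol G T d. \<exists>c. \<forall>x\<in>carrier G. \<xi> x = (\<Sum>j<r. c j * b j x)"
    using fd unfolding fin_dim_fun_space_def by blast
  have "\<exists>(k::nat) xs es. (\<forall>l<k. es l \<in> Pol G T d \<and> xs l \<in> carrier G) \<and>
     (\<forall>l<k. \<forall>j<k. es l (xs j) = (if l = j then 1 else 0)) \<and>
     (\<forall>f\<in>Pol G T d. \<forall>y\<in>carrier G. f y = (\<Sum>l<k. f (xs l) * es l y))"
    by (rule interp_aux[where J="{..<r}" and \<beta>=b, OF finite_lessThan refl Pol_closed]) (use rb in auto)
  then obtain m :: nat and xs es where
    E1: "\<forall>l<m. es l \<in> Pol G T d \<and> xs l \<in> carrier G" and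
    E2: "\<forall>l<m. \<forall>j<m. es l (xs j) = (if l = j then 1 else 0)" and
    E3: "\<forall>f\<in>Pol G T d. \<forall>y\<in>carrier G. f y = (\<Sum>l<m. f (xs l) * es l y)"
    by blast
  have xsG: "xs l \<in> carrier G" if "l < m" for l using E1 that by blast
  have esP: "es l \<in> Pol G T d" if "l < m" for l using E1 that by blast
  have es_cont: "continuous_map T euclideanreal (es l)" if "l < m" for l
    using esP[OF that] unfolding Pol_def by blast
  have expand: "f y = (\<Sum>l<m. f (xs l) * es l y)" if "f \<in> Pol G T d" "y \<in> carrier G" for f y
    using E3 that by blast
  have texp: "es l (inv\<^bsub>G\<^esub> g \<otimes>\<^bsub>G\<^esub> y) = (\<Sum>p<m. es l (inv\<^bsub>G\<^esub> g \<otimes>\<^bsub>G\<^esub> xs p) * es p y)"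
    if "g \<in> carrier G" "y \<in> carrier G" "l < m" for g y l
    using expand[OF transl_Pol[OF tg esP[OF that(3)], of "inv\<^bsub>G\<^esub> g"] that(2)] that by simp
  define \<rho> where "\<rho> = (\<lambda>g k l. es l (inv\<^bsub>G\<^esub> g \<otimes>\<^bsub>G\<^esub> xs k))"
  have rep: "cont_rep G T m \<rho>"
    unfolding cont_rep_def
  proof (intro conjI allI impI ballI)
    fix k l assume k: "k < m" and l: "l < m"
    have "continuous_map T T (\<lambda>g. inv\<^bsub>G\<^esub> g \<otimes>\<^bsub>G\<^esub> xs k)"
      by (rule cont_mult_fun[OF tg cont_inv_fun[OF tg continuous_map_id[unfolded id_def]] cont_const_g[OF tg xsG[OF k]]])
    then show "continuous_map T euclideanreal (\<lambda>g. \<rho> g k l)"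
      unfolding \<rho>_def by (rule cont_comp_real[OF _ es_cont[OF l]])
    show "\<rho> \<one>\<^bsub>G\<^esub> k l = (if k = l then 1 else 0)"
      using E2 k l xsG[OF k] unfolding \<rho>_def by auto
  next
    fix g h k l assume g: "g \<in> carrier G" and h: "h \<in> carrier G" and k: "k < m" and l: "l < m"
    have "\<rho> (g \<otimes>\<^bsub>G\<^esub> h) k l = es l (inv\<^bsub>G\<^esub> h \<otimes>\<^bsub>G\<^esub> (inv\<^bsub>G\<^esub> g \<otimes>\<^bsub>G\<^esub> xs k))"
      unfolding \<rho>_def using g h xsG[OF k] by (simp add: inv_mult_group m_assoc)
    also have "\<dots> = (\<Sum>p<m. es l (inv\<^bsub>G\<^esub> h \<otimes>\<^bsub>G\<^esub> xs p) * es p (inv\<^bsub>G\<^esub> g \<otimes>\<^bsub>G\<^esub> xs k))"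
      by (rule texp) (use g h l xsG[OF k] in auto)
    also have "\<dots> = (\<Sum>p<m. \<rho> g k p * \<rho> h p l)"
      unfolding \<rho>_def by (simp add: mult.commute)
    finally show "\<rho> (g \<otimes>\<^bsub>G\<^esub> h) k l = (\<Sum>p<m. \<rho> g k p * \<rho> h p l)" .
  qed
  define cx where "cx = (\<lambda>(\<xi>::'a \<Rightarrow> real) (x::nat \<Rightarrow> 'a) (k::nat). \<xi> (inv\<^bsub>G\<^esub> (x 0) \<otimes>\<^bsub>G\<^esub> xs k) - \<xi> (xs k))"
  have cx_coc: "cx \<xi> \<in> cocycles G T m \<rho> 1" if xi: "\<xi> \<in> Pol G T (Suc d)" for \<xi>
  proof -
    have xic: "continuous_map T euclideanreal \<xi>" using xi unfolding Pol_def by blast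
    have proj: "continuous_map (product_topology (\<lambda>_. T) {..<1::nat}) T (\<lambda>x. x 0)"
      using continuous_map_product_projection[of 0 "{..<1::nat}" "\<lambda>_. T"] by simp
    have "cx \<xi> \<in> cochains T m 1"
      unfolding cochains_def
    proof (intro CollectI allI impI)
      fix k assume k: "k < m"
      have "continuous_map (product_topology (\<lambda>_. T) {..<1::nat}) T (\<lambda>x. inv\<^bsub>G\<^esub> (x 0) \<otimes>\<^bsub>G\<^esub> xs k)"
        by (rule cont_mult_fun[OF tg cont_inv_fun[OF tg proj] cont_const_g[OF tg xsG[OF k]]])
      then have "continuous_map (product_topology (\<lambda>_. T) {..<1::nat}) euclideanreal (\<lambda>x. \<xi> (inv\<^bsub>G\<^esub> (x 0) \<otimes>\<^bsub>G\<^esub> xs k))"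
        by (rule cont_comp_real[OF _ xic])
      then show "continuous_map (product_topology (\<lambda>_. T) {..<1::nat}) euclideanreal (\<lambda>x. cx \<xi> x k)"
        unfolding cx_def by (intro continuous_map_diff) auto
    qed
    moreover have "coboundary G m \<rho> 1 (cx \<xi>) x k = 0"
      if x: "x \<in> PiE {..<Suc 1} (\<lambda>_. carrier G)" and k: "k < m" for x k
    proof -
      have x0: "x 0 \<in> carrier G" and x1: "x 1 \<in> carrier G" using x by (auto simp: PiE_iff)
      have xk: "xs k \<in> carrier G" using xsG[OF k] .
      define y where "y = inv\<^bsub>G\<^esub> (x 0) \<otimes>\<^bsub>G\<^esub> xs k"
      have y: "y \<in> carrier G" using x0 xk y_def by simp
      have ld: "left_diff G (x 1) \<xi> \<in> Pol G T d" by (rule left_diff_Pol[OF tg xi x1])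
      have "left_diff G (x 1) \<xi> y = (\<Sum>l<m. left_diff G (x 1) \<xi> (xs l) * es l y)"
        by (rule expand[OF ld y])
      then have S: "(\<Sum>l<m. \<rho> (x 0) k l * (\<xi> (inv\<^bsub>G\<^esub> (x 1) \<otimes>\<^bsub>G\<^esub> xs l) - \<xi> (xs l)))
          = \<xi> (inv\<^bsub>G\<^esub> (x 1) \<otimes>\<^bsub>G\<^esub> y) - \<xi> y"
        unfolding \<rho>_def left_diff_def y_def by (simp add: mult.commute)
      have e: "inv\<^bsub>G\<^esub> (x 0 \<otimes>\<^bsub>G\<^esub> x 1) \<otimes>\<^bsub>G\<^esub> xs k = inv\<^bsub>G\<^esub> (x 1) \<otimes>\<^bsub>G\<^esub> y"
        using x0 x1 xk unfolding y_def by (simp add: inv_mult_group m_assoc)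
      show ?thesis
        unfolding coboundary_def cx_def using S e
        by (simp add: y_def)
    qed
    ultimately show ?thesis unfolding cocycles_def by blast
  qed
  obtain rb :: nat and bb where
    B2: "\<forall>f\<in>cocycles G T m \<rho> 1. \<exists>c::nat \<Rightarrow> real.
           is_coboundary G T m \<rho> 1 (\<lambda>x k. f x k - (\<Sum>j<rb. c j * bb j x k))"
    using cfd rep unfolding cohom_fin_dim_def fin_dim_cohomology_def by blast
  define R where "R = (\<lambda>(v::nat \<Rightarrow> real) (x::nat \<Rightarrow> 'a) k. (\<Sum>l<m. \<rho> (x 0) k l * v l) - v k)"
  define P1 where "P1 = PiE {..<1::nat} (\<lambda>_. carrier G)"
  define D where "D = {c :: nat \<Rightarrow> real. \<exists>\<xi>\<in>Pol G T (Suc d). \<exists>v. \<forall>x\<in>P1. \<forall>k<m.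
      cx \<xi> x k - (\<Sum>j<rb. c j * bb j x k) = R v x k}"
  have clD: "closedA D"
    unfolding closedA_def
  proof (intro ballI allI)
    fix c1 c2 and a :: real assume c1: "c1 \<in> D" and c2: "c2 \<in> D"
    obtain \<xi>1 v1 where x1: "\<xi>1 \<in> Pol G T (Suc d)" and
      v1: "\<forall>x\<in>P1. \<forall>k<m. cx \<xi>1 x k - (\<Sum>j<rb. c1 j * bb j x k) = R v1 x k"
      using c1 unfolding D_def by blast
    obtain \<xi>2 v2 where x2: "\<xi>2 \<in> Pol G T (Suc d)" and
      v2: "\<forall>x\<in>P1. \<forall>k<m. cx \<xi>2 x k - (\<Sum>j<rb. c2 j * bb j x k) = R v2 x k"
      using c2 unfolding D_def by blast
    have "(\<lambda>y. \<xi>1 y - a * \<xi>2 y) \<in> Pol G T (Suc d)" by (rule closedA_D[OF Pol_closed x1 x2])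
    moreover have "\<forall>x\<in>P1. \<forall>k<m. cx (\<lambda>y. \<xi>1 y - a * \<xi>2 y) x k - (\<Sum>j<rb. (c1 j - a * c2 j) * bb j x k)
        = R (\<lambda>l. v1 l - a * v2 l) x k"
    proof (intro ballI allI impI)
      fix x k assume x: "x \<in> P1" and k: "k < m"
      have "cx (\<lambda>y. \<xi>1 y - a * \<xi>2 y) x k - (\<Sum>j<rb. (c1 j - a * c2 j) * bb j x k)
          = (cx \<xi>1 x k - (\<Sum>j<rb. c1 j * bb j x k)) - a * (cx \<xi>2 x k - (\<Sum>j<rb. c2 j * bb j x k))"
        unfolding cx_def by (simp add: algebra_simps sum_subtractf sum_distrib_left)
      also have "\<dots> = R v1 x k - a * R v2 x k" using v1 v2 x k by simp
      also have "\<dots> = R (\<lambda>l. v1 l - a * v2 l) x k"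
        unfolding R_def by (simp add: algebra_simps sum_subtractf sum_distrib_left)
      finally show "cx (\<lambda>y. \<xi>1 y - a * \<xi>2 y) x k - (\<Sum>j<rb. (c1 j - a * c2 j) * bb j x k)
        = R (\<lambda>l. v1 l - a * v2 l) x k" .
    qed
    ultimately show "(\<lambda>y. c1 y - a * c2 y) \<in> D" unfolding D_def by blast
  qed
  have spanD: "\<exists>c'. \<forall>i\<in>{..<rb}. c i = (\<Sum>j\<in>{..<rb}. c' j * (\<lambda>j i. if j = i then 1 else 0) j i)"
    for c :: "nat \<Rightarrow> real"
  proof (intro exI[of _ c] ballI)
    fix i assume i: "i \<in> {..<rb}"
    have "(\<Sum>j\<in>{..<rb}. c j * (\<lambda>j i. if j = i then 1 else (0::real)) j i) = (\<Sum>j\<in>{..<rb}. if j = i then c j else 0)"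
      by (rule sum.cong) auto
    also have "\<dots> = c i" using i by simp
    finally show "c i = (\<Sum>j\<in>{..<rb}. c j * (\<lambda>j i. if j = i then 1 else 0) j i)" by simp
  qed
  have "\<exists>(k::nat) xs es. (\<forall>l<k. es l \<in> D \<and> xs l \<in> {..<rb}) \<and>
     (\<forall>l<k. \<forall>j<k. es l (xs j) = (if l = j then 1 else 0)) \<and>
     (\<forall>f\<in>D. \<forall>y\<in>{..<rb}. f y = (\<Sum>l<k. f (xs l) * es l y))"
    by (rule interp_aux[where J="{..<rb}" and \<beta>="\<lambda>j i. if j = i then 1 else 0", OF finite_lessThan refl clD])
      (rule spanD)
  then obtain K :: nat and ps cs where
    D1: "\<forall>l<K. cs l \<in> D" and
    D3: "\<forall>f\<in>D. \<forall>y\<in>{..<rb}. f y = (\<Sum>l<K. f (ps l) * cs l y)"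
    by blast
  have "\<forall>l\<in>{..<K}. \<exists>p. fst p \<in> Pol G T (Suc d) \<and> (\<forall>x\<in>P1. \<forall>k<m.
      cx (fst p) x k - (\<Sum>j<rb. cs l j * bb j x k) = R (snd p) x k)"
  proof
    fix l assume l: "l \<in> {..<K}"
    then have "cs l \<in> D" using D1 by simp
    then obtain \<xi> v where "\<xi> \<in> Pol G T (Suc d)" "\<forall>x\<in>P1. \<forall>k<m.
      cx \<xi> x k - (\<Sum>j<rb. cs l j * bb j x k) = R v x k" unfolding D_def by blast
    then show "\<exists>p. fst p \<in> Pol G T (Suc d) \<and> (\<forall>x\<in>P1. \<forall>k<m.
      cx (fst p) x k - (\<Sum>j<rb. cs l j * bb j x k) = R (snd p) x k)"
      by (intro exI[of _ "(\<xi>, v)"]) simp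
  qed
  then obtain W where W: "\<forall>l\<in>{..<K}. fst (W l) \<in> Pol G T (Suc d) \<and> (\<forall>x\<in>P1. \<forall>k<m.
      cx (fst (W l)) x k - (\<Sum>j<rb. cs l j * bb j x k) = R (snd (W l)) x k)"
    by (rule bchoice[THEN exE]) blast
  define \<xi>s where "\<xi>s = (\<lambda>l. fst (W l))"
  define vs where "vs = (\<lambda>l. snd (W l))"
  have \<xi>sP: "\<forall>l<K. \<xi>s l \<in> Pol G T (Suc d)" using W \<xi>s_def by auto
  have \<xi>sW: "\<And>l x k. l < K \<Longrightarrow> x \<in> P1 \<Longrightarrow> k < m \<Longrightarrow>
      cx (\<xi>s l) x k = (\<Sum>j<rb. cs l j * bb j x k) + R (vs l) x k"
  proof -
    fix l x k assume l: "l < K" and x: "x \<in> P1" and k: "k < m"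
    have "cx (fst (W l)) x k - (\<Sum>j<rb. cs l j * bb j x k) = R (snd (W l)) x k"
      using W l x k by blast
    then show "cx (\<xi>s l) x k = (\<Sum>j<rb. cs l j * bb j x k) + R (vs l) x k"
      unfolding \<xi>s_def vs_def by simp
  qed
  show ?thesis
  proof (rule fin_dim_combine[where K=K and F=\<xi>s and m=m and E=es], intro ballI)
    fix \<xi> assume xi: "\<xi> \<in> Pol G T (Suc d)"
    from bspec[OF B2 cx_coc[OF xi]] obtain c where
      "is_coboundary G T m \<rho> 1 (\<lambda>x k. cx \<xi> x k - (\<Sum>j<rb. c j * bb j x k))" ..
    from cob1[OF this] obtain v where
      v: "\<forall>x\<in>P1. \<forall>k<m. cx \<xi> x k - (\<Sum>j<rb. c j * bb j x k) = R v x k"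
      unfolding P1_def R_def by auto
    have cD: "c \<in> D" unfolding D_def using xi v by (intro CollectI bexI[of _ \<xi>] exI[of _ v])
    define a where "a = (\<lambda>l. c (ps l))"
    have ca: "c j = (\<Sum>l<K. a l * cs l j)" if "j < rb" for j
      using D3 cD that unfolding a_def by auto
    define \<eta> where "\<eta> = (\<lambda>y. \<xi> y - (\<Sum>l<K. a l * \<xi>s l y))"
    have \<eta>P: "\<eta> \<in> Pol G T (Suc d)" unfolding \<eta>_def
      by (rule closed_sum[OF Pol_closed xi]) (use \<xi>sP in auto)
    define w where "w = (\<lambda>k. v k - (\<Sum>l<K. a l * vs l k))"
    have C\<eta>: "cx \<eta> x k = R w x k" if x: "x \<in> P1" and k: "k < m" for x k
    proof -
      have e1: "cx \<eta> x k = cx \<xi> x k - (\<Sum>l<K. a l * cx (\<xi>s l) x k)"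
        unfolding cx_def \<eta>_def by (simp add: sum_subtractf right_diff_distrib)
      have e2: "cx \<xi> x k = (\<Sum>j<rb. c j * bb j x k) + R v x k" proof -
        have "cx \<xi> x k - (\<Sum>j<rb. c j * bb j x k) = R v x k" using v x k by blast
        then show ?thesis by linarith
      qed
      have e3: "(\<Sum>l<K. a l * cx (\<xi>s l) x k)
          = (\<Sum>l<K. a l * (\<Sum>j<rb. cs l j * bb j x k)) + (\<Sum>l<K. a l * R (vs l) x k)"
      proof -
        have "(\<Sum>l<K. a l * cx (\<xi>s l) x k) = (\<Sum>l<K. a l * ((\<Sum>j<rb. cs l j * bb j x k) + R (vs l) x k))"
          by (rule sum.cong) (use \<xi>sW x k in auto)
        then show ?thesis by (simp add: distrib_left sum.distrib)
      qed
      have e4: "(\<Sum>j<rb. c j * bb j x k) = (\<Sum>l<K. a l * (\<Sum>j<rb. cs l j * bb j x k))"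
      proof -
        have "(\<Sum>j<rb. c j * bb j x k) = (\<Sum>j<rb. (\<Sum>l<K. a l * cs l j) * bb j x k)"
          by (rule sum.cong) (simp_all add: ca)
        also have "\<dots> = (\<Sum>j<rb. \<Sum>l<K. a l * (cs l j * bb j x k))"
          by (simp add: sum_distrib_right mult.assoc)
        also have "\<dots> = (\<Sum>l<K. \<Sum>j<rb. a l * (cs l j * bb j x k))"
          by (rule sum.swap)
        also have "\<dots> = (\<Sum>l<K. a l * (\<Sum>j<rb. cs l j * bb j x k))"
          by (simp add: sum_distrib_left)
        finally show ?thesis .
      qed
      have e5: "R w x k = R v x k - (\<Sum>l<K. a l * R (vs l) x k)"
      proof -
        have "R w x k = (\<Sum>p<m. \<rho> (x 0) k p * v p) - (\<Sum>p<m. \<Sum>l<K. a l * (\<rho> (x 0) k p * vs l p))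
            - v k + (\<Sum>l<K. a l * vs l k)"
          unfolding R_def w_def by (simp add: right_diff_distrib sum_subtractf sum_distrib_left mult_ac)
        also have "(\<Sum>p<m. \<Sum>l<K. a l * (\<rho> (x 0) k p * vs l p)) = (\<Sum>l<K. \<Sum>p<m. a l * (\<rho> (x 0) k p * vs l p))"
          by (rule sum.swap)
        finally show ?thesis
          unfolding R_def by (simp add: right_diff_distrib sum_subtractf sum_distrib_left)
      qed
      show ?thesis using e1 e2 e3 e4 e5 by simp
    qed
    define u where "u = (\<lambda>y. \<Sum>l<m. w l * es l y)"
    have inv\<eta>: "\<eta> (inv\<^bsub>G\<^esub> g \<otimes>\<^bsub>G\<^esub> y) - \<eta> y = u (inv\<^bsub>G\<^esub> g \<otimes>\<^bsub>G\<^esub> y) - u y"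
      if g: "g \<in> carrier G" and y: "y \<in> carrier G" for g y
    proof -
      define x where "x = restrict (\<lambda>_. g) {..<1::nat}"
      have x: "x \<in> P1" unfolding x_def P1_def using g by simp
      have x0: "x 0 = g" unfolding x_def by simp
      have ld: "left_diff G g \<eta> \<in> Pol G T d" by (rule left_diff_Pol[OF tg \<eta>P g])
      have "\<eta> (inv\<^bsub>G\<^esub> g \<otimes>\<^bsub>G\<^esub> y) - \<eta> y = left_diff G g \<eta> y" by (simp add: left_diff_def)
      also have "\<dots> = (\<Sum>k<m. left_diff G g \<eta> (xs k) * es k y)" by (rule expand[OF ld y])
      also have "\<dots> = (\<Sum>k<m. ((\<Sum>l<m. \<rho> g k l * w l) - w k) * es k y)"
      proof (rule sum.cong)
        fix k assume "k \<in> {..<m}"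
        then have k: "k < m" by simp
        have "left_diff G g \<eta> (xs k) = cx \<eta> x k" unfolding cx_def left_diff_def x0 by simp
        also have "\<dots> = (\<Sum>l<m. \<rho> g k l * w l) - w k" using C\<eta>[OF x k] unfolding R_def x0 .
        finally show "left_diff G g \<eta> (xs k) * es k y = ((\<Sum>l<m. \<rho> g k l * w l) - w k) * es k y" by simp
      qed simp
      also have "\<dots> = (\<Sum>l<m. w l * (\<Sum>k<m. \<rho> g k l * es k y)) - u y"
      proof -
        have "(\<Sum>k<m. ((\<Sum>l<m. \<rho> g k l * w l) - w k) * es k y)
            = (\<Sum>k<m. \<Sum>l<m. w l * (\<rho> g k l * es k y)) - (\<Sum>k<m. w k * es k y)"
        proof -
          have "(\<Sum>k<m. ((\<Sum>l<m. \<rho> g k l * w l) - w k) * es k y)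
              = (\<Sum>k<m. (\<Sum>l<m. \<rho> g k l * w l) * es k y) - (\<Sum>k<m. w k * es k y)"
            by (simp add: left_diff_distrib sum_subtractf)
          moreover have "(\<Sum>k<m. (\<Sum>l<m. \<rho> g k l * w l) * es k y) = (\<Sum>k<m. \<Sum>l<m. w l * (\<rho> g k l * es k y))"
            by (rule sum.cong[OF refl]) (simp add: sum_distrib_left sum_distrib_right mult_ac)
          ultimately show ?thesis by simp
        qed
        also have "(\<Sum>k<m. \<Sum>l<m. w l * (\<rho> g k l * es k y)) = (\<Sum>l<m. \<Sum>k<m. w l * (\<rho> g k l * es k y))"
          by (rule sum.swap)
        finally show ?thesis unfolding u_def by (simp add: sum_distrib_left)
      qed
      also have "(\<Sum>l<m. w l * (\<Sum>k<m. \<rho> g k l * es k y)) = u (inv\<^bsub>G\<^esub> g \<otimes>\<^bsub>G\<^esub> y)"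
        unfolding u_def
      proof (rule sum.cong)
        fix l assume "l \<in> {..<m}"
        then have l: "l < m" by simp
        have "(\<Sum>k<m. \<rho> g k l * es k y) = es l (inv\<^bsub>G\<^esub> g \<otimes>\<^bsub>G\<^esub> y)"
          using texp[OF g y l] unfolding \<rho>_def by simp
        then show "w l * (\<Sum>k<m. \<rho> g k l * es k y) = w l * es l (inv\<^bsub>G\<^esub> g \<otimes>\<^bsub>G\<^esub> y)" by simp
      qed simp
      finally show ?thesis .
    qed
    have const: "\<eta> z - u z = \<eta> \<one>\<^bsub>G\<^esub> - u \<one>\<^bsub>G\<^esub>" if z: "z \<in> carrier G" for z
      using inv\<eta>[of "inv\<^bsub>G\<^esub> z" "\<one>\<^bsub>G\<^esub>"] z by simp
    show "\<exists>a w \<kappa>. \<forall>z\<in>carrier G. \<xi> z = (\<Sum>l<K. a l * \<xi>s l z) + (\<Sum>l<m. w l * es l z) + \<kappa>"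
    proof (rule exI[of _ a], rule exI[of _ w], rule exI[of _ "\<eta> \<one>\<^bsub>G\<^esub> - u \<one>\<^bsub>G\<^esub>"], intro ballI)
      fix z assume z: "z \<in> carrier G"
      show "\<xi> z = (\<Sum>l<K. a l * \<xi>s l z) + (\<Sum>l<m. w l * es l z) + (\<eta> \<one>\<^bsub>G\<^esub> - u \<one>\<^bsub>G\<^esub>)"
        using const[OF z] unfolding \<eta>_def u_def by simp
    qed
  qed
qed

theorem corollary6p7:
  fixes G :: "('g, 'b) monoid_scheme" and T :: "'g topology"
  assumes "lcsc_group G T"
    and "cohom_fin_dim G T"
  shows "\<forall>d. fin_dim_fun_space (carrier G) (Pol G T d)"
proof
  fix d
  have tg: "topological_group G T" using assms(1) unfolding lcsc_group_def by blast
  show "fin_dim_fun_space (carrier G) (Pol G T d)"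
  proof (induction d)
    case 0
    then show ?case by (rule Pol0_fin[OF tg])
  next
    case (Suc d)
    then show ?case by (rule step[OF tg assms(2)])
  qed
qed

end
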